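(* Let $\gamma_X$ be any dynamic metric space and $k\in\mathbf{Z}_+$. For any $\mathbf{a},\mathbf{b}\in\mathbf{R}^6_\times$ with $\mathbf{a}\le\mathbf{b}$ in $\mathbf{R}^6_\times$, one has $\mathrm{rk}_k(\gamma_X)(\mathbf{a})\ge\mathrm{rk}_k(\gamma_X)(\mathbf{b})$ in $\mathbf{Z}_+\cup\{\infty\}$.
   Context: A dynamic metric space (DMS) is a pair $\gamma_X=(X,d_X(\cdot))$ where $X$ is a nonempty finite set and $d_X(\cdot):\mathbf{R}\times X\times X\to\mathbf{R}_+$ satisfies: each $d_X(t)$ is a pseudometric, some $d_X(t_0)$ is a metric, and $t\mapsto d_X(t)(x,x')$ is continuous for all $x,x'$. For a closed interval $I$, $(\bigvee_I d_X)(x,x'):=\min_{s\in I}d_X(s)(x,x')$. For symmetric $d:X\times X\to\mathbf{R}_+$ vanishing on the diagonal, $\mathcal{R}_\delta(X,d)$ is the simplicial complex on $X$ whose simplices are the nonempty $\sigma$ with $d(x,x')\le\delta$ for all $x,x'\in\sigma$; $\mathrm{H}_k$ is simplicial homology over a fixed field. $\mathbf{R}^6_\times$ denotes $\mathbf{R}^6$ with the product order of $\mathbf{R}\times\mathbf{R}^{\mathrm{op}}\times\mathbf{R}^{\mathrm{op}}\times\mathbf{R}^{\mathrm{op}}\times\mathbf{R}\times\mathbf{R}$, i.e. $\mathbf{a}\le\mathbf{b}$ iff $a_1\le b_1$, $a_2\ge b_2$, $a_3\ge b_3$, $a_4\ge b_4$, $a_5\le b_5$, $a_6\le b_6$. A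 vector $\mathbf{a}=(a_1,\dots,a_6)$ is admissible if $a_1\le a_2$, $a_4\le a_5$, $a_3,a_6\ge0$, $[a_1,a_2]\subseteq[a_4,a_5]$ and $a_3\le a_6$; otherwise non-admissible; it is trivially non-admissible if there is no admissible $\mathbf{b}$ with $\mathbf{b}<\mathbf{a}$ in $\mathbf{R}^6_\times$. The (adapted) $k$-th rank invariant $\mathrm{rk}_k(\gamma_X):\mathbf{R}^6\to\mathbf{Z}_+\cup\{\infty\}$ is: the rank of the linear map $\mathrm{H}_k(\mathcal{R}_{a_3}(X,\bigvee_{[a_1,a_2]}d_X)\hookrightarrow\mathcal{R}_{a_6}(X,\bigvee_{[a_4,a_5]}d_X))$ if $\mathbf{a}$ is admissible; $\infty$ if $\mathbf{a}$ is trivially non-admissible; $0$ otherwise. *)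

theory Defs
  imports Complex_Main "HOL-Library.Extended_Nat" "HOL-Library.Function_Algebras"
begin

definition is_pseudometric_on :: "'a set \<Rightarrow> ('a \<Rightarrow> 'a \<Rightarrow> real) \<Rightarrow> bool" where
  "is_pseudometric_on X d \<longleftrightarrow>
     (\<forall>x\<in>X. d x x = 0) \<and>
     (\<forall>x\<in>X. \<forall>y\<in>X. d x y \<ge> 0 \<and> d x y = d y x) \<and>
     (\<forall>x\<in>X. \<forall>y\<in>X. \<forall>z\<in>X. d x z \<le> d x y + d y z)"

definition is_metric_on :: "'a set \<Rightarrow> ('a \<Rightarrow> 'a \<Rightarrow> real) \<Rightarrow> bool" where
  "is_metric_on X d \<longleftrightarrow> is_pseudometric_on X d \<and> (\<forall>x\<in>X. \<forall>y\<in>X. d x y = 0 \<longrightarrow> x = y)"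

definition is_DMS :: "'a set \<Rightarrow> (real \<Rightarrow> 'a \<Rightarrow> 'a \<Rightarrow> real) \<Rightarrow> bool" where
  "is_DMS X d \<longleftrightarrow> finite X \<and> X \<noteq> {} \<and>
     (\<forall>t. is_pseudometric_on X (d t)) \<and>
     (\<exists>t0. is_metric_on X (d t0)) \<and>
     (\<forall>x\<in>X. \<forall>y\<in>X. continuous_on UNIV (\<lambda>t. d t x y))"

definition interval_min :: "(real \<Rightarrow> 'a \<Rightarrow> 'a \<Rightarrow> real) \<Rightarrow> real \<Rightarrow> real \<Rightarrow> 'a \<Rightarrow> 'a \<Rightarrow> real" where
  "interval_min d a b x y = Inf ((\<lambda>s. d s x y) ` {a..b})"

definition rips :: "'a set \<Rightarrow> ('a \<Rightarrow> 'a \<Rightarrow> real) \<Rightarrow> real \<Rightarrow> 'a set set" where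
  "rips X d \<delta> = {\<sigma>. \<sigma> \<subseteq> X \<and> \<sigma> \<noteq> {} \<and> (\<forall>x\<in>\<sigma>. \<forall>y\<in>\<sigma>. d x y \<le> \<delta>)}"

text \<open>Simplicial k-chains of a complex K with coefficients in a field 'f, as
  coefficient functions on simplices supported on the k-simplices of K.\<close>
definition chains :: "'a set set \<Rightarrow> nat \<Rightarrow> ('a set \<Rightarrow> 'f::field) set" where
  "chains K k = {c. \<forall>\<sigma>. c \<sigma> \<noteq> 0 \<longrightarrow> \<sigma> \<in> K \<and> card \<sigma> = Suc k}"

text \<open>Simplicial boundary, simplices oriented by the linear order on vertices:
  the face of \<sigma> omitting its i-th vertex (0-based, increasing order) gets sign (-1)^i.\<close>
definition bdry :: "'a::linorder set \<Rightarrow> ('a set \<Rightarrow> 'f::field) \<Rightarrow> ('a set \<Rightarrow> 'f)" where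
  "bdry X c = (\<lambda>\<tau>. \<Sum>x\<in>X - \<tau>. (- 1) ^ card {y\<in>\<tau>. y < x} * c (insert x \<tau>))"

definition cycles :: "'a::linorder set \<Rightarrow> 'a set set \<Rightarrow> nat \<Rightarrow> ('a set \<Rightarrow> 'f::field) set" where
  "cycles X K k = {c \<in> chains K k. k = 0 \<or> bdry X c = (\<lambda>_. 0)}"

definition boundaries :: "'a::linorder set \<Rightarrow> 'a set set \<Rightarrow> nat \<Rightarrow> ('a set \<Rightarrow> 'f::field) set" where
  "boundaries X K k = bdry X ` chains K (Suc k)"

abbreviation fscale :: "'f::field \<Rightarrow> ('a set \<Rightarrow> 'f) \<Rightarrow> ('a set \<Rightarrow> 'f)" where
  "fscale r c \<equiv> (\<lambda>\<sigma>. r * c \<sigma>)"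

text \<open>Rank of H_k(K) \<rightarrow> H_k(L) induced by an inclusion K \<subseteq> L:
  the dimension of the image of Z_k(K) in Z_k(L)/B_k(L), i.e.
  dim (Z_k(K) + B_k(L)) - dim B_k(L).\<close>
definition incl_rank :: "'f::field itself \<Rightarrow> 'a::linorder set \<Rightarrow> nat \<Rightarrow> 'a set set \<Rightarrow> 'a set set \<Rightarrow> nat" where
  "incl_rank F X k K L =
     vector_space.dim (fscale :: 'f \<Rightarrow> _) (cycles X K k \<union> boundaries X L k)
     - vector_space.dim (fscale :: 'f \<Rightarrow> _) (boundaries X L k :: ('a set \<Rightarrow> 'f) set)"

type_synonym vec6 = "real \<times> real \<times> real \<times> real \<times> real \<times> real"

definition le6 :: "vec6 \<Rightarrow> vec6 \<Rightarrow> bool" where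
  "le6 a b \<longleftrightarrow> (case a of (a1,a2,a3,a4,a5,a6) \<Rightarrow> case b of (b1,b2,b3,b4,b5,b6) \<Rightarrow>
     a1 \<le> b1 \<and> a2 \<ge> b2 \<and> a3 \<ge> b3 \<and> a4 \<ge> b4 \<and> a5 \<le> b5 \<and> a6 \<le> b6)"

definition admissible :: "vec6 \<Rightarrow> bool" where
  "admissible a \<longleftrightarrow> (case a of (a1,a2,a3,a4,a5,a6) \<Rightarrow>
     a1 \<le> a2 \<and> a4 \<le> a5 \<and> a3 \<ge> 0 \<and> a6 \<ge> 0 \<and> {a1..a2} \<subseteq> {a4..a5} \<and> a3 \<le> a6)"

definition trivially_nonadmissible :: "vec6 \<Rightarrow> bool" where
  "trivially_nonadmissible a \<longleftrightarrow> \<not> admissible a \<and> \<not> (\<exists>b. admissible b \<and> le6 b a \<and> b \<noteq> a)"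

definition rank_inv :: "'f::field itself \<Rightarrow> 'a::linorder set \<Rightarrow> (real \<Rightarrow> 'a \<Rightarrow> 'a \<Rightarrow> real) \<Rightarrow> nat \<Rightarrow> vec6 \<Rightarrow> enat" where
  "rank_inv F X d k a =
     (if admissible a then
        (case a of (a1,a2,a3,a4,a5,a6) \<Rightarrow>
          enat (incl_rank F X k (rips X (interval_min d a1 a2) a3) (rips X (interval_min d a4 a5) a6)))
      else if trivially_nonadmissible a then \<infinity> else 0)"

end

theory Submission
  imports Defs
begin

context vector_space
begin

lemma dim_mono_fin:
  assumes "A \<subseteq> span B" "finite W" "B \<subseteq> span W"
  shows "dim A \<le> dim B"
proof -
  obtain BB where BB: "BB \<subseteq> B" "independent BB" "B \<subseteq> span BB" "card BB = dim B"
    using basis_exists by blast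
  have "finite BB" using independent_span_bound[OF assms(2) BB(2)] BB(1) assms(3) by blast
  have "A \<subseteq> span BB" using assms(1) BB(3) by (metis span_mono span_span subset_trans)
  then have "dim A \<le> card BB" using dim_le_card \<open>finite BB\<close> by blast
  then show ?thesis using BB(4) by simp
qed

lemma dim_key:
  assumes W: "finite W" and UT: "U \<union> T \<subseteq> span W" and ST: "S \<subseteq> span T"
  shows "dim (U \<union> T) + dim S \<le> dim (U \<union> S) + dim T"
proof -
  obtain BS where BS: "BS \<subseteq> S" "independent BS" "S \<subseteq> span BS" "card BS = dim S"
    using basis_exists by blast
  have TW: "span T \<subseteq> span W" using UT by (simp add: span_minimal subspace_span)
  have SW: "S \<subseteq> span W" using ST TW by blast
  have USW: "span (U \<union> S) \<subseteq> span W" using UT SW by (simp add: span_minimal subspace_span)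
  have "BS \<subseteq> span T" using BS(1) ST by blast
  then obtain BT where BT: "BS \<subseteq> BT" "BT \<subseteq> span T" "independent BT" "span T \<subseteq> span BT"
    using maximal_independent_subset_extend[of BS "span T"] BS(2) by blast
  have "BS \<subseteq> span (U \<union> S)" using BS(1) span_superset by blast
  then obtain BU where BU: "BS \<subseteq> BU" "BU \<subseteq> span (U \<union> S)" "independent BU" "span (U \<union> S) \<subseteq> span BU"
    using maximal_independent_subset_extend[of BS "span (U \<union> S)"] BS(2) by blast
  have cT: "card BT = dim T"
    using basis_card_eq_dim[OF BT(2) BT(4) BT(3)] by simp
  have cU: "card BU = dim (U \<union> S)"
    using basis_card_eq_dim[OF BU(2) BU(4) BU(3)] by simp
  have fT: "finite BT" using independent_span_bound[OF W BT(3)] BT(2) TW by blast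
  have fU: "finite BU" using independent_span_bound[OF W BU(3)] BU(2) USW by blast
  have "U \<union> T \<subseteq> span (BU \<union> BT)"
  proof -
    have "U \<subseteq> span BU" using BU(4) span_superset by blast
    moreover have "T \<subseteq> span BT" using BT(4) span_superset by blast
    ultimately show ?thesis by (meson Un_least le_sup_iff span_mono subset_trans sup.cobounded1 sup.cobounded2)
  qed
  then have "dim (U \<union> T) \<le> card (BU \<union> BT)" using dim_le_card fT fU by blast
  moreover have "card (BU \<union> BT) + card (BU \<inter> BT) = card BU + card BT"
    using card_Un_Int[OF fU fT] by simp
  moreover have "card BS \<le> card (BU \<inter> BT)"
    using BU(1) BT(1) fU by (intro card_mono) auto
  ultimately show ?thesis using cT cU BS(4) by linarith
qed

lemma rank_mono_abs:
  assumes W: "finite W" and Z: "Z' \<subseteq> Z" and B: "B \<subseteq> B'"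
    and ZW: "Z \<subseteq> span W" and BW: "B' \<subseteq> span W"
  shows "dim (Z' \<union> B') - dim B' \<le> dim (Z \<union> B) - dim B"
proof -
  have k: "dim (Z' \<union> B') + dim B \<le> dim (Z' \<union> B) + dim B'"
    using dim_key[OF W, of Z' B' B] Z ZW BW B span_superset by blast
  have m1: "dim (Z' \<union> B) \<le> dim (Z \<union> B)"
    using dim_mono_fin[OF _ W, of "Z' \<union> B" "Z \<union> B"] Z B ZW BW span_superset by blast
  have m2: "dim B' \<le> dim (Z' \<union> B')"
    using dim_mono_fin[OF _ W, of "B'" "Z' \<union> B'"] Z ZW BW span_superset by blast
  have m3: "dim B \<le> dim (Z \<union> B)"
    using dim_mono_fin[OF _ W, of "B" "Z \<union> B"] ZW BW B span_superset by blast
  show ?thesis using k m1 m2 m3 by linarith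
qed

end

lemma vs_fscale: "vector_space (fscale :: 'f::field \<Rightarrow> ('a set \<Rightarrow> 'f) \<Rightarrow> ('a set \<Rightarrow> 'f))"
  by unfold_locales (auto simp: fun_eq_iff algebra_simps)

lemma ms_fscale: "module (fscale :: 'f::field \<Rightarrow> ('a set \<Rightarrow> 'f) \<Rightarrow> ('a set \<Rightarrow> 'f))"
  using vs_fscale module_iff_vector_space by blast

lemma sum_fun_apply: "(sum f A) x = sum (\<lambda>a. f a x) A"
  by (induction A rule: infinite_finite_induct) auto

lemma supp_in_span:
  fixes c :: "'a set \<Rightarrow> 'f::field"
  assumes "finite X" "\<forall>\<sigma>. c \<sigma> \<noteq> 0 \<longrightarrow> \<sigma> \<subseteq> X"
  shows "c \<in> module.span fscale ((\<lambda>s. (\<lambda>\<sigma>. if \<sigma> = s then 1 else 0)) ` Pow X)"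
proof -
  let ?e = "\<lambda>s. (\<lambda>\<sigma>. if \<sigma> = s then (1::'f) else 0)"
  have eq: "c = (\<Sum>s\<in>Pow X. fscale (c s) (?e s))"
  proof
    fix \<tau>
    have "(\<Sum>s\<in>Pow X. fscale (c s) (?e s)) \<tau> = (\<Sum>s\<in>Pow X. c s * (if \<tau> = s then 1 else 0))"
      by (simp add: sum_fun_apply)
    also have "\<dots> = c \<tau>"
      using assms by (cases "\<tau> \<subseteq> X") (auto simp: sum.delta' if_distrib cong: if_cong)
    finally show "c \<tau> = (\<Sum>s\<in>Pow X. fscale (c s) (?e s)) \<tau>" by simp
  qed
  have "(\<Sum>s\<in>Pow X. fscale (c s) (?e s)) \<in> module.span fscale (?e ` Pow X)"
    by (intro module.span_sum[OF ms_fscale] module.span_scale[OF ms_fscale]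
        module.span_base[OF ms_fscale]) auto
  then show ?thesis using eq by simp
qed

lemma chains_mono: "K \<subseteq> L \<Longrightarrow> chains K k \<subseteq> chains L k"
  unfolding chains_def by auto

lemma cycles_mono: "K \<subseteq> L \<Longrightarrow> cycles X K k \<subseteq> cycles X L k"
  unfolding cycles_def using chains_mono by blast

lemma boundaries_mono: "K \<subseteq> L \<Longrightarrow> boundaries X K k \<subseteq> boundaries X L k"
  unfolding boundaries_def using chains_mono by blast

lemma cycles_supp:
  assumes "K \<subseteq> Pow X" "c \<in> cycles X K k" "c \<sigma> \<noteq> 0" shows "\<sigma> \<subseteq> X"
  using assms unfolding cycles_def chains_def by auto

lemma boundaries_supp:
  assumes "K \<subseteq> Pow X" "c \<in> boundaries X K k" "c \<tau> \<noteq> 0" shows "\<tau> \<subseteq> X"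
proof -
  obtain e where e: "e \<in> chains K (Suc k)" "c = bdry X e"
    using assms(2) unfolding boundaries_def by blast
  have "(\<Sum>x\<in>X - \<tau>. (- 1) ^ card {y\<in>\<tau>. y < x} * e (insert x \<tau>)) \<noteq> 0"
    using assms(3) e(2) unfolding bdry_def by simp
  then obtain x where "x \<in> X - \<tau>" "e (insert x \<tau>) \<noteq> 0"
    by (metis (no_types, lifting) mult_zero_right sum.neutral)
  then have "insert x \<tau> \<in> K" using e(1) unfolding chains_def by blast
  then show ?thesis using assms(1) by blast
qed

lemma incl_rank_mono:
  fixes X :: "'a::linorder set"
  assumes fin: "finite X" and K: "K' \<subseteq> K" and L: "L \<subseteq> L'"
    and KX: "K \<subseteq> Pow X" and LX: "L' \<subseteq> Pow X"
  shows "incl_rank TYPE('f::field) X k K' L' \<le> incl_rank TYPE('f) X k K L"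
proof -
  let ?W = "(\<lambda>s. (\<lambda>\<sigma>. if \<sigma> = s then (1::'f) else 0)) ` Pow X"
  have W: "finite ?W" using fin by simp
  have ZW: "(cycles X K k :: ('a set \<Rightarrow> 'f) set) \<subseteq> module.span fscale ?W"
    using supp_in_span[OF fin] cycles_supp[OF KX] by blast
  have BW: "(boundaries X L' k :: ('a set \<Rightarrow> 'f) set) \<subseteq> module.span fscale ?W"
    using supp_in_span[OF fin] boundaries_supp[OF LX] by blast
  show ?thesis unfolding incl_rank_def
    using vector_space.rank_mono_abs[OF vs_fscale W cycles_mono[OF K] boundaries_mono[OF L] ZW BW]
    by simp
qed

lemma rips_mono:
  assumes "\<forall>x\<in>X. \<forall>y\<in>X. d' x y \<le> d x y" "\<delta> \<le> \<delta>'"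
  shows "rips X d \<delta> \<subseteq> rips X d' \<delta>'"
  using assms unfolding rips_def by (auto, meson order_trans subsetD)

lemma rips_sub: "rips X d \<delta> \<subseteq> Pow X"
  unfolding rips_def by auto

lemma imin_mono:
  assumes "is_DMS X d" "x \<in> X" "y \<in> X" "b1 \<le> b2" "a1 \<le> b1" "b2 \<le> a2"
  shows "interval_min d a1 a2 x y \<le> interval_min d b1 b2 x y"
  unfolding interval_min_def
proof (rule cInf_superset_mono)
  show "(\<lambda>s. d s x y) ` {b1..b2} \<noteq> {}" using assms by auto
  have "\<forall>s. d s x y \<ge> 0" using assms unfolding is_DMS_def is_pseudometric_on_def by blast
  then show "bdd_below ((\<lambda>s. d s x y) ` {a1..a2})" by (auto intro: bdd_belowI)
  show "(\<lambda>s. d s x y) ` {b1..b2} \<subseteq> (\<lambda>s. d s x y) ` {a1..a2}" using assms by auto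
qed

lemma adm_convex:
  assumes "admissible c" "le6 c a" "le6 a b" "admissible b"
  shows "admissible a"
  using assms unfolding admissible_def le6_def
  by (cases a; cases b; cases c) auto

theorem proposition4p3:
  fixes X :: "'a::linorder set" and d :: "real \<Rightarrow> 'a \<Rightarrow> 'a \<Rightarrow> real"
    and k :: nat and a b :: vec6
  assumes "is_DMS X d"
    and "le6 a b"
  shows "rank_inv TYPE('f::field) X d k a \<ge> rank_inv TYPE('f) X d k b"
proof (cases "admissible a")
  case aA: True
  show ?thesis
  proof (cases "admissible b")
    case bA: True
    obtain a1 a2 a3 a4 a5 a6 where a: "a = (a1,a2,a3,a4,a5,a6)" by (cases a) auto
    obtain b1 b2 b3 b4 b5 b6 where b: "b = (b1,b2,b3,b4,b5,b6)" by (cases b) auto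
    have ia: "a1 \<le> a2" "a4 \<le> a5" "a4 \<le> a1" "a2 \<le> a5" "a3 \<le> a6"
      using aA unfolding a admissible_def by auto
    have ib: "b1 \<le> b2" "b4 \<le> b5" "b4 \<le> b1" "b2 \<le> b5" "b3 \<le> b6"
      using bA unfolding b admissible_def by auto
    have le: "a1 \<le> b1" "b2 \<le> a2" "b3 \<le> a3" "b4 \<le> a4" "a5 \<le> b5" "a6 \<le> b6"
      using assms(2) unfolding a b le6_def by auto
    have fin: "finite X" using assms(1) unfolding is_DMS_def by blast
    have K: "rips X (interval_min d b1 b2) b3 \<subseteq> rips X (interval_min d a1 a2) a3"
      by (rule rips_mono) (use imin_mono[OF assms(1)] ib le in auto)
    have L: "rips X (interval_min d a4 a5) a6 \<subseteq> rips X (interval_min d b4 b5) b6"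
      by (rule rips_mono) (use imin_mono[OF assms(1)] ia le in auto)
    show ?thesis
      using incl_rank_mono[OF fin K L rips_sub rips_sub, where k=k and 'f='f] aA bA
      unfolding rank_inv_def a b by simp
  next
    case bN: False
    have "a \<noteq> b" using aA bN by auto
    then have "\<not> trivially_nonadmissible b"
      using aA assms(2) unfolding trivially_nonadmissible_def by blast
    then show ?thesis using bN unfolding rank_inv_def by simp
  qed
next
  case aN: False
  show ?thesis
  proof (cases "trivially_nonadmissible a")
    case True
    then show ?thesis using aN unfolding rank_inv_def by simp
  next
    case False
    then obtain c where c: "admissible c" "le6 c a" "c \<noteq> a"
      using aN unfolding trivially_nonadmissible_def by blast
    have bN: "\<not> admissible b" using adm_convex[OF c(1,2) assms(2)] aN by blast
    have "le6 c b" using c(2) assms(2) unfolding le6_def by (cases a; cases b; cases c) auto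
    moreover have "c \<noteq> b" using c(1) bN by auto
    ultimately have "\<not> trivially_nonadmissible b"
      using c(1) unfolding trivially_nonadmissible_def by blast
    then show ?thesis using bN unfolding rank_inv_def by simp
  qed
qed

end
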